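(* Any efficient strategy is regret-free.
   Context: Let $\mathcal{X}$ be a finite set of alternatives. A proto-ranking is an irreflexive and transitive binary relation on $\mathcal{X}$; a ranking is a total proto-ranking; a tournament is a total and asymmetric binary relation on $\mathcal{X}$. The chair has a fixed preference $\succ$, a ranking on $\mathcal{X}$. Interaction: given a tournament $\mathrel{W}$, start from $R_0=\varnothing$; in each period with $R_{t-1}$ not total the chair offers a pair $\{x,y\}$ unranked by $R_{t-1}$, the winner is $x$ if $x\mathrel{W}y$ and $y$ otherwise, and $R_t$ is the transitive closure of $R_{t-1}\cup\{(\text{winner},\text{loser})\}$; stop when $R_t$ is total. A strategy assigns to each non-terminal history (sequence of (winner, loser) pairs) a pair unranked at it; its outcome under $\mathrel{W}$ is the final ranking. A ranking is $\mathrel{W}$-feasible if it is the outcome under $\mathrel{W}$ of some strategy. $R$ is more aligned with $\succ$ than $R'$ if for all $x\succ y$, $xR'y$ implies $xRy$. A ranking is $\mathrel{W}$-unimprovable if no other $\mathrel{W}$-feasible ranking is more aligned with $\succ$. A strategy is regret-free if for every tournament $\mathrel{W}$ its outcome under $\mathrel{W}$ is $\mathrel{W}$-unimprovable. A ranking $R$ is $\mathrel{W}$-efficient if $x\succ y$ and $x\mathrel{W}y$ imply $xRy$; a strategy is efficient if for every tournament $\mathrel{W}$ its outcome under $\mathrel{W}$ is $\mathrel{W}$-efficient. *)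

theory Defs
  imports Main
begin

definition proto_ranking :: "('a \<times> 'a) set \<Rightarrow> bool" where
  "proto_ranking R \<longleftrightarrow> (\<forall>x. (x,x) \<notin> R) \<and> trans R"

definition total_rel :: "('a \<times> 'a) set \<Rightarrow> bool" where
  "total_rel R \<longleftrightarrow> (\<forall>x y. x \<noteq> y \<longrightarrow> (x,y) \<in> R \<or> (y,x) \<in> R)"

definition ranking :: "('a \<times> 'a) set \<Rightarrow> bool" where
  "ranking R \<longleftrightarrow> proto_ranking R \<and> total_rel R"

definition tournament :: "('a \<times> 'a) set \<Rightarrow> bool" where
  "tournament W \<longleftrightarrow> total_rel W \<and> (\<forall>x y. (x,y) \<in> W \<longrightarrow> (y,x) \<notin> W)"

text \<open>A history is the list of (winner, loser) pairs so far; its relation is built as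
  R_0 = {} and R_t = transitive closure of (R_{t-1} \<union> {(winner,loser)}).\<close>

definition hist_rel :: "('a \<times> 'a) list \<Rightarrow> ('a \<times> 'a) set" where
  "hist_rel h = foldl (\<lambda>R p. trancl (R \<union> {p})) {} h"

definition unranked :: "('a \<times> 'a) set \<Rightarrow> ('a \<times> 'a) \<Rightarrow> bool" where
  "unranked R p \<longleftrightarrow> fst p \<noteq> snd p \<and> p \<notin> R \<and> (snd p, fst p) \<notin> R"

inductive legal_hist :: "('a \<times> 'a) list \<Rightarrow> bool" where
  nil: "legal_hist []"
| snoc: "legal_hist h \<Longrightarrow> \<not> total_rel (hist_rel h) \<Longrightarrow> unranked (hist_rel h) p
           \<Longrightarrow> legal_hist (h @ [p])"

text \<open>A strategy maps each history to an (ordered representation of an) offered pair;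
  it must offer an unranked pair at every non-terminal history.\<close>
definition strategy :: "(('a \<times> 'a) list \<Rightarrow> 'a \<times> 'a) \<Rightarrow> bool" where
  "strategy \<sigma> \<longleftrightarrow> (\<forall>h. legal_hist h \<and> \<not> total_rel (hist_rel h) \<longrightarrow> unranked (hist_rel h) (\<sigma> h))"

definition match_result :: "('a \<times> 'a) set \<Rightarrow> 'a \<times> 'a \<Rightarrow> 'a \<times> 'a" where
  "match_result W p = (if p \<in> W then p else (snd p, fst p))"

fun play :: "(('a \<times> 'a) list \<Rightarrow> 'a \<times> 'a) \<Rightarrow> ('a \<times> 'a) set \<Rightarrow> nat \<Rightarrow> ('a \<times> 'a) list" where
  "play \<sigma> W 0 = []"
| "play \<sigma> W (Suc n) = (if total_rel (hist_rel (play \<sigma> W n)) then play \<sigma> W n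
                        else play \<sigma> W n @ [match_result W (\<sigma> (play \<sigma> W n))])"

definition outcome :: "(('a \<times> 'a) list \<Rightarrow> 'a \<times> 'a) \<Rightarrow> ('a \<times> 'a) set \<Rightarrow> ('a \<times> 'a) set" where
  "outcome \<sigma> W = hist_rel (play \<sigma> W (LEAST n. total_rel (hist_rel (play \<sigma> W n))))"

definition feasible :: "('a \<times> 'a) set \<Rightarrow> ('a \<times> 'a) set \<Rightarrow> bool" where
  "feasible W R \<longleftrightarrow> ranking R \<and> (\<exists>\<sigma>. strategy \<sigma> \<and> outcome \<sigma> W = R)"

definition more_aligned :: "('a \<times> 'a) set \<Rightarrow> ('a \<times> 'a) set \<Rightarrow> ('a \<times> 'a) set \<Rightarrow> bool" where
  "more_aligned P R R' \<longleftrightarrow> (\<forall>x y. (x,y) \<in> P \<longrightarrow> (x,y) \<in> R' \<longrightarrow> (x,y) \<in> R)"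

definition unimprovable :: "('a \<times> 'a) set \<Rightarrow> ('a \<times> 'a) set \<Rightarrow> ('a \<times> 'a) set \<Rightarrow> bool" where
  "unimprovable P W R \<longleftrightarrow> ranking R \<and>
     \<not> (\<exists>R'. feasible W R' \<and> R' \<noteq> R \<and> more_aligned P R' R)"

definition regret_free :: "('a \<times> 'a) set \<Rightarrow> (('a \<times> 'a) list \<Rightarrow> 'a \<times> 'a) \<Rightarrow> bool" where
  "regret_free P \<sigma> \<longleftrightarrow> strategy \<sigma> \<and> (\<forall>W. tournament W \<longrightarrow> unimprovable P W (outcome \<sigma> W))"

definition efficient_ranking :: "('a \<times> 'a) set \<Rightarrow> ('a \<times> 'a) set \<Rightarrow> ('a \<times> 'a) set \<Rightarrow> bool" where
  "efficient_ranking P W R \<longleftrightarrow> (\<forall>x y. (x,y) \<in> P \<longrightarrow> (x,y) \<in> W \<longrightarrow> (x,y) \<in> R)"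

definition efficient :: "('a \<times> 'a) set \<Rightarrow> (('a \<times> 'a) list \<Rightarrow> 'a \<times> 'a) \<Rightarrow> bool" where
  "efficient P \<sigma> \<longleftrightarrow> strategy \<sigma> \<and> (\<forall>W. tournament W \<longrightarrow> efficient_ranking P W (outcome \<sigma> W))"

end

theory Submission
  imports Defs
begin

lemma hist_rel_snoc: "hist_rel (h @ [p]) = trancl (hist_rel h \<union> {p})"
  unfolding hist_rel_def by simp

lemmas trancl_Un_trancl = trancl_trancl_Un

lemma hist_rel_set: "hist_rel h = trancl (set h)"
proof (induction h rule: rev_induct)
  case Nil
  then show ?case by (simp add: hist_rel_def)
next
  case (snoc p h)
  then show ?case using trancl_Un_trancl[of "set h" "{p}"]
    by (simp add: hist_rel_snoc Un_commute)
qed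

lemma unranked_match: "unranked R p \<Longrightarrow> unranked R (match_result W p)"
  unfolding unranked_def match_result_def by auto

lemma play_legal: "strategy \<sigma> \<Longrightarrow> legal_hist (play \<sigma> W n)"
proof (induction n)
  case 0
  then show ?case by (simp add: legal_hist.nil)
next
  case (Suc n)
  then show ?case
    by (auto intro!: legal_hist.snoc unranked_match simp: strategy_def)
qed

lemma legal_irrefl: "legal_hist h \<Longrightarrow> (x,x) \<notin> hist_rel h"
proof (induction h arbitrary: x rule: legal_hist.induct)
  case nil
  then show ?case by (simp add: hist_rel_def)
next
  case (snoc h p)
  obtain a b where p: "p = (a,b)" by fastforce
  let ?R = "hist_rel h"
  have tr: "trans ?R" by (simp add: hist_rel_set)
  have rt: "?R\<^sup>* = ?R\<^sup>=" using tr by (simp add: rtrancl_trancl_reflcl trancl_id)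
  have tc: "?R\<^sup>+ = ?R" using tr by (simp add: trancl_id)
  have "hist_rel (h @ [p]) = ?R \<union> {(c,d). (c,a) \<in> ?R\<^sup>= \<and> (b,d) \<in> ?R\<^sup>=}"
    using hist_rel_snoc[of h p] p trancl_insert[of a b ?R] rt tc by simp
  moreover have "(x,x) \<notin> {(c,d). (c,a) \<in> ?R\<^sup>= \<and> (b,d) \<in> ?R\<^sup>=}"
    using snoc.hyps(3) p tr unfolding unranked_def trans_def by auto
  ultimately show ?case using snoc.IH by auto
qed

lemma play_in_W:
  assumes "strategy \<sigma>" "tournament W"
  shows "set (play \<sigma> W n) \<subseteq> W"
proof (induction n)
  case 0
  then show ?case by simp
next
  case (Suc n)
  have "legal_hist (play \<sigma> W n)" using play_legal assms(1) by blast
  then have "\<not> total_rel (hist_rel (play \<sigma> W n)) \<Longrightarrow> unranked (hist_rel (play \<sigma> W n)) (\<sigma> (play \<sigma> W n))"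
    using assms(1) by (simp add: strategy_def)
  moreover have "unranked R q \<Longrightarrow> match_result W q \<in> W" for R q
    using assms(2) unfolding unranked_def match_result_def tournament_def total_rel_def
    by (cases q) auto
  ultimately show ?case using Suc by (simp del: play.simps add: play.simps(2)[of \<sigma> W n]) blast
qed

lemma play_card:
  assumes "strategy \<sigma>"
  shows "(\<forall>m<n. \<not> total_rel (hist_rel (play \<sigma> W m))) \<Longrightarrow> n \<le> card (hist_rel (play (\<sigma> :: ('a::finite \<times> 'a) list \<Rightarrow> 'a \<times> 'a) W n))"
proof (induction n)
  case 0
  then show ?case by simp
next
  case (Suc n)
  let ?h = "play \<sigma> W n"
  have nt: "\<not> total_rel (hist_rel ?h)" using Suc.prems by auto
  have leg: "legal_hist ?h" using play_legal assms by blast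
  have "unranked (hist_rel ?h) (\<sigma> ?h)"
    using nt leg assms unfolding strategy_def by blast
  then have un: "unranked (hist_rel ?h) (match_result W (\<sigma> ?h))"
    by (rule unranked_match)
  let ?q = "match_result W (\<sigma> ?h)"
  have eq: "play \<sigma> W (Suc n) = ?h @ [?q]" using nt by simp
  have q1: "?q \<notin> hist_rel ?h" using un unfolding unranked_def by (cases ?q) simp
  have "hist_rel ?h \<union> {?q} \<subseteq> hist_rel (?h @ [?q])"
    unfolding hist_rel_snoc by (rule trancl_incr)
  then have "hist_rel ?h \<subset> hist_rel (?h @ [?q])"
    using q1 by blast
  then have "card (hist_rel ?h) < card (hist_rel (?h @ [?q]))"
    by (rule psubset_card_mono[OF finite])
  moreover have "n \<le> card (hist_rel ?h)"
  proof (rule Suc.IH)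
    show "\<forall>m<n. \<not> total_rel (hist_rel (play \<sigma> W m))" using Suc.prems by simp
  qed
  ultimately show ?case using eq by simp
qed

lemma outcome_ranking:
  assumes "strategy (\<sigma> :: ('a::finite \<times> 'a) list \<Rightarrow> 'a \<times> 'a)"
  shows "ranking (outcome \<sigma> W)"
proof -
  have "\<exists>n. total_rel (hist_rel (play \<sigma> W n))"
  proof (rule ccontr)
    assume A: "\<not> ?thesis"
    define N where "N = Suc (card (UNIV :: ('a \<times> 'a) set))"
    have "\<forall>m<N. \<not> total_rel (hist_rel (play \<sigma> W m))" using A by blast
    then have "N \<le> card (hist_rel (play \<sigma> W N))" by (rule play_card[OF assms])
    then have "Suc (card (UNIV :: ('a \<times> 'a) set)) \<le> card (hist_rel (play \<sigma> W (Suc (card (UNIV :: ('a \<times> 'a) set)))))"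
      unfolding N_def .
    moreover have "card (hist_rel (play \<sigma> W (Suc (card (UNIV :: ('a \<times> 'a) set))))) \<le> card (UNIV :: ('a \<times> 'a) set)"
      by (simp add: card_mono)
    ultimately show False by simp
  qed
  then have "total_rel (outcome \<sigma> W)"
    unfolding outcome_def by (rule LeastI_ex)
  moreover have "proto_ranking (outcome \<sigma> W)"
    unfolding outcome_def proto_ranking_def
    using legal_irrefl[OF play_legal[OF assms]] by (simp add: hist_rel_set)
  ultimately show ?thesis by (simp add: ranking_def)
qed

lemma outcome_sub:
  assumes "strategy \<sigma>" "tournament W"
  shows "\<exists>S. S \<subseteq> W \<and> outcome \<sigma> W = S\<^sup>+"
  unfolding outcome_def hist_rel_set using play_in_W[OF assms] by blast

theorem corollary1:
  fixes P :: "('a::finite \<times> 'a) set" and \<sigma> :: "('a \<times> 'a) list \<Rightarrow> 'a \<times> 'a"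
  assumes "ranking P"
    and "efficient P \<sigma>"
  shows "regret_free P \<sigma>"
proof -
  have st: "strategy \<sigma>" using assms(2) by (simp add: efficient_def)
  show ?thesis unfolding regret_free_def
  proof (intro conjI allI impI st)
    fix W :: "('a \<times> 'a) set"
    assume W: "tournament W"
    let ?R = "outcome \<sigma> W"
    have rR: "ranking ?R" using outcome_ranking st by blast
    have eff: "efficient_ranking P W ?R" using assms(2) W by (simp add: efficient_def)
    have "\<not> (feasible W R' \<and> R' \<noteq> ?R \<and> more_aligned P R' ?R)" for R'
    proof
      assume H: "feasible W R' \<and> R' \<noteq> ?R \<and> more_aligned P R' ?R"
      then obtain \<sigma>' where s': "strategy \<sigma>'" and o': "outcome \<sigma>' W = R'" and rR': "ranking R'"
        unfolding feasible_def by blast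
      obtain S where S: "S \<subseteq> W" "R' = S\<^sup>+" using outcome_sub[OF s' W] o' by blast
      have key: "(v,u) \<in> ?R" if "(v,u) \<in> S" for u v
      proof -
        have vuW: "(v,u) \<in> W" using S that by blast
        have vuR': "(v,u) \<in> R'" using S that by blast
        have "u \<noteq> v" using vuW W unfolding tournament_def by blast
        moreover have "(u,v) \<notin> ?R"
        proof
          assume uv: "(u,v) \<in> ?R"
          show False
          proof (cases "(u,v) \<in> P")
            case True
            then have "(u,v) \<in> R'" using H uv unfolding more_aligned_def by blast
            then show False using vuR' rR' unfolding ranking_def proto_ranking_def trans_def by blast
          next
            case False
            then have "(v,u) \<in> P" using assms(1) \<open>u \<noteq> v\<close> unfolding ranking_def total_rel_def by blast
            then have "(v,u) \<in> ?R" using eff vuW unfolding efficient_ranking_def by blast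
            then show False using uv rR unfolding ranking_def proto_ranking_def trans_def by blast
          qed
        qed
        ultimately show ?thesis using rR unfolding ranking_def total_rel_def by blast
      qed
      have "R' \<subseteq> ?R"
      proof -
        have "S \<subseteq> ?R" using key by auto
        then have "S\<^sup>+ \<subseteq> ?R\<^sup>+" by (rule trancl_mono_subset)
        moreover have "?R\<^sup>+ = ?R" using rR by (simp add: ranking_def proto_ranking_def trancl_id)
        ultimately show ?thesis using S by simp
      qed
      moreover have "?R \<subseteq> R'"
      proof
        fix p assume p: "p \<in> ?R"
        obtain x y where xy: "p = (x,y)" by fastforce
        have "x \<noteq> y" using p xy rR unfolding ranking_def proto_ranking_def by blast
        then have "(x,y) \<in> R' \<or> (y,x) \<in> R'" using rR' unfolding ranking_def total_rel_def by blast
        moreover have "(y,x) \<notin> R'"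
          using \<open>R' \<subseteq> ?R\<close> p xy rR unfolding ranking_def proto_ranking_def trans_def by blast
        ultimately show "p \<in> R'" using xy by blast
      qed
      ultimately show False using H by blast
    qed
    then show "unimprovable P W ?R" unfolding unimprovable_def using rR by blast
  qed
qed

end
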